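(* There exists a nonnegative sequence $\{\lambda_n\}_{n=1}^\infty\in\mathrm{GBV}$ with $\{\lambda_n\}\notin R_0^+\mathrm{BV}$ such that $$\sum_{n=1}^\infty n^{p+p\gamma-2}\lambda_n^p<\infty$$ for every $1<p<\infty$ and every $\gamma$ with $1/p-1<\gamma<1/p$.
   Context: $\Delta c_n:=c_n-c_{n+1}$. A sequence $\mathbf c=\{c_n\}_{n=1}^\infty$ belongs to the class $\mathrm{GBV}$ if $c_n\ge 0$ for all $n$, $c_n\to 0$ as $n\to\infty$, and there is a positive constant $M(\mathbf c)$ depending only on $\mathbf c$ such that $\sum_{n=m}^{2m}|\Delta c_n|\le M(\mathbf c)\,c_m$ for all $m=1,2,\dots$. A nonnegative sequence $\mathbf b=\{b_n\}$ with $b_n\to0$ belongs to $R_0^+\mathrm{BV}$ ("rest bounded variation") if there is a constant $M(\mathbf b)$ depending only on $\mathbf b$ such that $\sum_{n=m}^\infty|b_n-b_{n+1}|\le M(\mathbf b)\,b_m$ for all $m=1,2,\dots$. *)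

theory Defs
  imports "HOL-Analysis.Analysis"
begin

text \<open>Sequences are indexed from 1; the value at index 0 is irrelevant.\<close>

definition GBV :: "(nat \<Rightarrow> real) \<Rightarrow> bool" where
  "GBV c \<longleftrightarrow> (\<forall>n\<ge>1. c n \<ge> 0) \<and> (\<lambda>n. c n) \<longlonglongrightarrow> 0 \<and>
     (\<exists>M>0. \<forall>m\<ge>1. (\<Sum>n=m..2*m. \<bar>c n - c (Suc n)\<bar>) \<le> M * c m)"

definition R0BV :: "(nat \<Rightarrow> real) \<Rightarrow> bool" where
  "R0BV b \<longleftrightarrow> (\<forall>n\<ge>1. b n \<ge> 0) \<and> b \<longlonglongrightarrow> 0 \<and>
     (\<exists>M. \<forall>m\<ge>1. summable (\<lambda>k. \<bar>b (k + m) - b (Suc (k + m))\<bar>) \<and>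
                 (\<Sum>k. \<bar>b (k + m) - b (Suc (k + m))\<bar>) \<le> M * b m)"

end

theory Submission
  imports Defs "HOL-Library.Discrete_Functions"
begin

definition ww :: "nat \<Rightarrow> real" where
  "ww k = (1/4) ^ (2 * 2 ^ floor_log k)"

definition cc :: "nat \<Rightarrow> real" where
  "cc n = (if n = 2 ^ floor_log n then 1/2 else 1) * ww (floor_log n)"

lemma ww_pos: "ww k > 0" unfolding ww_def by simp

lemma ww_anti: "k \<le> k' \<Longrightarrow> ww k' \<le> ww k"
  unfolding ww_def
  by (rule power_decreasing) (auto intro: floor_log_le_iff)

lemma ww_le: "ww k \<le> (1/4) ^ k"
  unfolding ww_def
  by (rule power_decreasing) (auto simp: floor_log_exp2_ge)

lemma cc_pos: "cc n > 0" unfolding cc_def using ww_pos[of "floor_log n"] by simp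

lemma cc_le_ww: "cc n \<le> ww (floor_log n)" unfolding cc_def using ww_pos[of "floor_log n"] by simp

lemma cc_ge_ww: "cc n \<ge> ww (floor_log n) / 2" unfolding cc_def using ww_pos[of "floor_log n"] by simp

lemma cc_bound: assumes "n \<ge> 1" shows "cc n \<le> 4 / (real n)^2"
proof -
  let ?L = "floor_log n"
  have "n < 2 * 2 ^ ?L" by (rule floor_log_exp2_gt)
  hence "real n < 2 * 2 ^ ?L" by (metis of_nat_less_iff of_nat_numeral of_nat_mult of_nat_power)
  hence "(real n)^2 < (2 * 2 ^ ?L)^2" using assms by (intro power_strict_mono) auto
  also have "\<dots> = 4 * ((2::real) * 2) ^ ?L" by (simp only: power2_eq_square power_mult_distrib)
  also have "\<dots> = 4 * 4 ^ ?L" by simp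
  finally have h: "(real n)^2 < 4 * 4 ^ ?L" .
  have "cc n \<le> (1/4) ^ ?L" using cc_le_ww ww_le order_trans by blast
  also have "\<dots> = 1 / 4 ^ ?L" by (simp add: power_divide)
  also have "\<dots> \<le> 4 / (real n)^2" using h assms by (simp add: field_simps)
  finally show ?thesis .
qed

lemma cc_lim: "cc \<longlonglongrightarrow> 0"
proof (rule tendsto_sandwich[where f="\<lambda>_. 0" and h="\<lambda>n. 4 * inverse (real n)"])
  show "\<forall>\<^sub>F n in sequentially. 0 \<le> cc n" by (intro always_eventually allI) (simp add: less_imp_le[OF cc_pos])
  show "\<forall>\<^sub>F n in sequentially. cc n \<le> 4 * inverse (real n)"
    unfolding eventually_sequentially
  proof (intro exI[of _ 1] allI impI)
    fix n :: nat assume n: "1 \<le> n"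
    have "cc n \<le> 4 / (real n)^2" by (rule cc_bound[OF n])
    also have "\<dots> \<le> 4 * inverse (real n)" using n by (simp add: field_simps power2_eq_square)
    finally show "cc n \<le> 4 * inverse (real n)" .
  qed
  show "(\<lambda>_. 0) \<longlonglongrightarrow> (0::real)" by simp
  show "(\<lambda>n. 4 * inverse (real n)) \<longlonglongrightarrow> 0"
    using tendsto_mult_right_zero[OF lim_inverse_n, of 4] by simp
qed

lemma cc_same:
  assumes "2^k < n" "Suc n < 2 * 2^k"
  shows "cc n = cc (Suc n)"
proof -
  have "floor_log n = k" using assms by (intro floor_log_eqI) auto
  moreover have "floor_log (Suc n) = k" using assms by (intro floor_log_eqI) auto
  ultimately show ?thesis unfolding cc_def using assms by auto
qed

lemma cc_GBV_pt:
  assumes m: "1 \<le> m" and n: "m \<le> n" "n \<le> 2 * m"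
  shows "\<bar>cc n - cc (Suc n)\<bar> \<le> (if n \<in> {2^floor_log m, 2 * 2^floor_log m - 1, 2 * 2^floor_log m} then ww (floor_log m) else 0)"
proof -
  let ?k = "floor_log m"
  have k1: "2^?k \<le> m" using m by (intro floor_log_exp2_le) auto
  have k2: "m < 2 * 2^?k" by (rule floor_log_exp2_gt)
  have b1: "cc n \<le> ww ?k"
    using cc_le_ww[of n] ww_anti[of ?k "floor_log n"] floor_log_le_iff[of m n] n by linarith
  have b2: "cc (Suc n) \<le> ww ?k"
    using cc_le_ww[of "Suc n"] ww_anti[of ?k "floor_log (Suc n)"] floor_log_le_iff[of m "Suc n"] n by linarith
  show ?thesis
  proof (cases "n \<in> {2^floor_log m, 2 * 2^floor_log m - 1, 2 * 2^floor_log m}")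
    case True
    then show ?thesis using b1 b2 cc_pos[of n] cc_pos[of "Suc n"] by auto
  next
    case False
    have "cc n = cc (Suc n)"
    proof (cases "n < 2 * 2^?k")
      case True
      then show ?thesis using False k1 n by (intro cc_same[of ?k]) auto
    next
      case F2: False
      show ?thesis using False F2 k1 k2 n by (intro cc_same[of "Suc ?k"]) auto
    qed
    then show ?thesis using False by simp
  qed
qed

lemma cc_GBV: "GBV cc"
  unfolding GBV_def
proof (intro conjI)
  show "\<forall>n\<ge>1. 0 \<le> cc n" using cc_pos less_imp_le by auto
  show "cc \<longlonglongrightarrow> 0" by (rule cc_lim)
  show "\<exists>M>0. \<forall>m\<ge>1. (\<Sum>n = m..2 * m. \<bar>cc n - cc (Suc n)\<bar>) \<le> M * cc m"
  proof (intro exI[of _ 6] conjI allI impI)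
    fix m :: nat assume m: "1 \<le> m"
    let ?k = "floor_log m"
    let ?F = "{2^?k, 2 * 2^?k - 1, 2 * 2^?k} :: nat set"
    have "(\<Sum>n = m..2 * m. \<bar>cc n - cc (Suc n)\<bar>) \<le> (\<Sum>n = m..2 * m. (if n \<in> ?F then ww ?k else 0))"
      by (rule sum_mono) (use cc_GBV_pt m in auto)
    also have "\<dots> = (\<Sum>n \<in> {m..2*m} \<inter> ?F. ww ?k)"
      by (rule sum.inter_restrict[symmetric]) simp
    also have "\<dots> \<le> (\<Sum>n \<in> ?F. ww ?k)"
      by (rule sum_mono2) (auto simp: less_imp_le[OF ww_pos])
    also have "\<dots> = card ?F * ww ?k" by simp
    also have "\<dots> \<le> 3 * ww ?k"
    proof -
      have "card ?F \<le> 3" by (rule order_trans[OF card_insert_le_m1]) (auto simp: card_insert_le_m1)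
      then show ?thesis using ww_pos[of ?k] by (intro mult_right_mono) auto
    qed
    also have "\<dots> \<le> 6 * cc m" using cc_ge_ww[of m] by simp
    finally show "(\<Sum>n = m..2 * m. \<bar>cc n - cc (Suc n)\<bar>) \<le> 6 * cc m" .
  qed simp
qed


lemma cc_notR0: "\<not> R0BV cc"
proof
  assume "R0BV cc"
  then obtain M where M: "\<And>m. m \<ge> 1 \<Longrightarrow> summable (\<lambda>k. \<bar>cc (k + m) - cc (Suc (k + m))\<bar>) \<and>
                 (\<Sum>k. \<bar>cc (k + m) - cc (Suc (k + m))\<bar>) \<le> M * cc m"
    unfolding R0BV_def by blast
  obtain i0 :: nat where i0: "real i0 > M + 1" using reals_Archimedean2 by blast
  define i where "i = Suc i0"
  have i: "real i > M + 1" using i0 unfolding i_def by simp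
  have i1: "i \<ge> 1" unfolding i_def by simp
  define a :: nat where "a = 2^i"
  define b :: nat where "b = 2 * 2^i - 1"
  define m :: nat where "m = 2^a"
  define W where "W = ww a"
  have ab: "b - a = 2^i - 1" unfolding a_def b_def by simp
  have ia: "i < a" unfolding a_def by (rule less_exp)
  have m1: "m \<ge> 1" unfolding m_def by simp
  have Lk: "floor_log k = i" if "a \<le> k" "k \<le> b" for k
  proof -
    have pp: "(2::nat)^i > 0" by simp
    show ?thesis using that pp unfolding a_def b_def by (intro floor_log_eqI; linarith)
  qed
  have wk: "ww k = W" if "a \<le> k" "k \<le> b" for k
    unfolding W_def ww_def using Lk[OF that] Lk[of a] unfolding a_def b_def by simp
  have ab_le: "a \<le> b" unfolding a_def b_def by simp
  have cm: "cc m = W / 2" unfolding cc_def m_def using wk[of a] ab_le by simp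
  let ?f = "\<lambda>n. \<bar>cc n - cc (Suc n)\<bar>"
  have pt: "?f (2^j - 1) = W / 2" if j: "a < j" "j \<le> b" for j
  proof -
    have j1: "j \<ge> 2" using j ia i1 by linarith
    have pj: "(2::nat)^j = 2 * 2^(j-1)" using j1 by (cases j) auto
    have pj1: "(2::nat) \<le> 2^(j-1)" using power_increasing[of 1 "j-1" "2::nat"] j1 by simp
    have p: "(2::nat)^j \<ge> 4" using pj pj1 by simp
    have e1: "floor_log (2^j - 1) = j - 1"
      using pj pj1 by (intro floor_log_eqI) linarith+
    have ne: "2^j - 1 \<noteq> (2::nat)^(j-1)" using pj pj1 by linarith
    have c1: "cc (2^j - 1) = W" unfolding cc_def using e1 ne wk[of "j-1"] j by simp
    have s: "Suc (2^j - 1) = (2::nat)^j" using p by simp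
    have c2: "cc (Suc (2^j - 1)) = W / 2" unfolding s cc_def using wk[of j] j by simp
    show ?thesis using c1 c2 ww_pos[of a] unfolding W_def by simp
  qed
  have Wp: "W > 0" unfolding W_def by (rule ww_pos)
  have "real (b - a) * (W/2) = (\<Sum>j\<in>{a<..b}. ?f (2^j - 1))"
  proof -
    have "(\<Sum>j\<in>{a<..b}. ?f (2^j - 1)) = (\<Sum>j\<in>{a<..b}. W/2)"
      by (rule sum.cong[OF refl]) (rule pt; simp)
    then show ?thesis by simp
  qed
  also have "\<dots> = (\<Sum>n\<in>(\<lambda>j. 2^j - 1) ` {a<..b}. ?f n)"
  proof (rule sum.reindex[symmetric, unfolded comp_def])
    show "inj_on (\<lambda>j. 2 ^ j - 1::nat) {a<..b}"
    proof (rule inj_onI)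
      fix x y assume "(2::nat)^x - 1 = 2^y - 1"
      moreover have "(2::nat)^x \<ge> 1" "(2::nat)^y \<ge> 1" by simp_all
      ultimately have "(2::nat)^x = 2^y" by linarith
      then show "x = y" by simp
    qed
  qed
  also have "\<dots> \<le> (\<Sum>n\<in>{m..<2^b}. ?f n)"
  proof (rule sum_mono2)
    show "(\<lambda>j. 2 ^ j - 1) ` {a<..b} \<subseteq> {m..<2 ^ b}"
    proof
      fix x assume "x \<in> (\<lambda>j. 2 ^ j - 1::nat) ` {a<..b}"
      then obtain j where j: "a < j" "j \<le> b" "x = 2^j - 1" by auto
      have "(2::nat)^j \<ge> 2^Suc a" using j by (intro power_increasing) auto
      hence x1: "x \<ge> m" unfolding m_def j(3) by simp
      have "(2::nat)^j \<le> 2^b" using j by (intro power_increasing) auto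
      moreover have "(2::nat)^j \<ge> 1" by simp
      ultimately have "x < 2^b" unfolding j(3) by linarith
      with x1 show "x \<in> {m..<2^b}" by auto
    qed
  qed auto
  also have "(\<Sum>n\<in>{m..<2^b}. ?f n) = (\<Sum>k<2^b - m. ?f (k + m))"
  proof -
    have "m \<le> 2^b" unfolding m_def using ab_le by (intro power_increasing) auto
    then have "{m..<2^b} = {0+m..<(2^b-m)+m}" by simp
    then show ?thesis by (simp only: sum.shift_bounds_nat_ivl atLeast0LessThan)
  qed
  also have "\<dots> \<le> (\<Sum>k. ?f (k + m))"
    using M[OF m1] by (intro sum_le_suminf) auto
  also have "\<dots> \<le> M * cc m" using M[OF m1] by simp
  finally have "real (b - a) * (W / 2) \<le> M * (W / 2)" using cm by simp
  hence "real (b - a) \<le> M" using Wp by simp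
  moreover have "real (b - a) \<ge> real i" unfolding ab
  proof -
    have "i < 2^i" by (rule less_exp)
    then show "real i \<le> real (2^i - 1)" by linarith
  qed
  ultimately show False using i by linarith
qed


lemma cc_bound2: assumes "n \<ge> 1" shows "cc n \<le> 4 * real n powr (-2)"
proof -
  have "real n powr (-2) = inverse ((real n)^2)" using assms
    by (simp add: powr_minus)
  then show ?thesis using cc_bound[OF assms] by (simp add: field_simps)
qed

lemma cc_summ:
  fixes p e :: real
  assumes p: "1 < p" and e: "e < p - 1"
  shows "summable (\<lambda>n. real (Suc n) powr e * cc (Suc n) powr p)"
proof (rule summable_comparison_test')
  show "summable (\<lambda>n. 4 powr p * real (Suc n) powr (e - 2 * p))"
  proof (rule summable_mult)
    have "summable (\<lambda>n. real n powr (e - 2 * p))" using p e by (simp add: summable_real_powr_iff)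
    then show "summable (\<lambda>n. real (Suc n) powr (e - 2 * p))"
      by (subst summable_Suc_iff[where f="\<lambda>n. real n powr (e - 2 * p)"])
  qed
  fix n :: nat assume "n \<ge> 0"
  let ?x = "real (Suc n)"
  have x: "?x > 0" by simp
  have "cc (Suc n) powr p \<le> (4 * ?x powr (-2)) powr p"
    using cc_bound2[of "Suc n"] cc_pos[of "Suc n"] p by (intro powr_mono2) auto
  also have "\<dots> = 4 powr p * ?x powr (-2 * p)"
    by (simp add: powr_mult powr_powr)
  finally have h: "cc (Suc n) powr p \<le> 4 powr p * ?x powr (-2 * p)" .
  have "norm (?x powr e * cc (Suc n) powr p) = ?x powr e * cc (Suc n) powr p"
    by simp
  also have "\<dots> \<le> ?x powr e * (4 powr p * ?x powr (-2 * p))"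
    using h by (intro mult_left_mono) auto
  also have "\<dots> = 4 powr p * (?x powr e * ?x powr (-2 * p))" by (simp only: mult_ac)
  also have "\<dots> = 4 powr p * ?x powr (e - 2 * p)" using powr_add[of ?x e "-2*p"] by simp
  finally show "norm (?x powr e * cc (Suc n) powr p) \<le> 4 powr p * ?x powr (e - 2 * p)" .
qed

theorem theorem3:
  shows "\<exists>lam::nat \<Rightarrow> real. (\<forall>n\<ge>1. lam n \<ge> 0) \<and> GBV lam \<and> \<not> R0BV lam \<and>
    (\<forall>p \<gamma>::real. 1 < p \<longrightarrow> 1/p - 1 < \<gamma> \<longrightarrow> \<gamma> < 1/p \<longrightarrow>
       summable (\<lambda>n. real (Suc n) powr (p + p*\<gamma> - 2) * lam (Suc n) powr p))"
proof (intro exI[of _ cc] conjI allI impI)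
  show "\<And>n. 1 \<le> n \<Longrightarrow> 0 \<le> cc n" using cc_pos less_imp_le by blast
  show "GBV cc" by (rule cc_GBV)
  show "\<not> R0BV cc" by (rule cc_notR0)
  fix p \<gamma> :: real assume p: "1 < p" and g: "1/p - 1 < \<gamma>" "\<gamma> < 1/p"
  have "p * \<gamma> < p * (1/p)" using p g by (intro mult_strict_left_mono) auto
  hence "p * \<gamma> < 1" using p by simp
  hence "p + p*\<gamma> - 2 < p - 1" by linarith
  then show "summable (\<lambda>n. real (Suc n) powr (p + p*\<gamma> - 2) * cc (Suc n) powr p)"
    using cc_summ p by blast
qed

end
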